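(* Let $\mathcal X=\mathcal X_1\times\cdots\times\mathcal X_b$, $\mathcal X_i=\mathbb R^{m_i\times n_i}$ with trace inner product and arbitrary norms $\|\cdot\|_{(i)}$ (dual norms $\|\cdot\|_{(i)\star}$). Let $f:\mathcal X\to\mathbb R$ be continuously differentiable with $f\ge f^\star$ for some $f^\star\in\mathbb R$. Let $\mathcal D$ be an arbitrary probability distribution on subsets of $[b]$, and assume there are constants $L^0_{i,S}\ge0$ ($S\in\operatorname{supp}(\mathcal D)$), with $L^0_{i,S}=0$ for $i\notin S$, such that for every $S\in\operatorname{supp}(\mathcal D)$, $X\in\mathcal X$ and $\Gamma\in\mathcal X$ with $\Gamma_i=0$ for $i\notin S$, $$f(X+\Gamma)-f(X)-\langle\nabla f(X),\Gamma\rangle\le\sum_{i\in S}\frac{L^0_{i,S}}2\|\Gamma_i\|_{(i)}^2.$$ From $X^0$, for $k=0,1,\dots$ draw $S^k\sim\mathcal D$ i.i.d., set $X_i^{k+1}=X_i^k-\gamma_i^k(\nabla_if(X^k))^\sharp$ for $i\in S^k$ and $X_i^{k+1}=X_i^k$ otherwise, with $\gamma_i^k=1/L^0_{i,S^k}$. Then for every $K\ge1$, $$\frac1K\sum_{k=0}^{K-1}\sum_{i=1}^b\frac{w_i}{\frac1b\sum_{j=1}^bw_j}\mathbb E\big[\|\nabla_if(X^k)\|_{(i)\star}^2\big]\le\frac{f(X^0)-f^\star}{K\left(\frac1b\sum_{j=1}^bw_j\right)},\qquad w_i:=\mathbb E\left[\frac{\mathbb 1\{i\in\hat S\}}{2L^0_{i,\hat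 S}}\right],$$ where $\hat S\sim\mathcal D$.
   Context: $\operatorname{supp}(\mathcal D)$ is the collection of subsets of $[b]$ with positive probability. For $G\in\mathcal X_i$, $G^\sharp$ is an element of $\arg\max_Z\{\langle G,Z\rangle-\frac12\|Z\|_{(i)}^2\}$. In $w_i$ the integrand is understood to be $0$ when $i\notin\hat S$. *)

theory Defs
  imports "HOL-Analysis.Analysis" "HOL-Probability.Probability"
begin

text \<open>A point X of the product space is a function i r c giving entry (r,c) of
block i (blocks i = 1..b, block i is an m i by n i real matrix). Entries
outside the index ranges are 0.\<close>

type_synonym blockmat = "nat \<Rightarrow> nat \<Rightarrow> real"
type_synonym point = "nat \<Rightarrow> blockmat"

definition blk :: "nat \<Rightarrow> nat \<Rightarrow> blockmat set" where
  "blk m n = {A. \<forall>r c. (m \<le> r \<or> n \<le> c) \<longrightarrow> A r c = 0}"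

definition Xspace :: "nat \<Rightarrow> (nat \<Rightarrow> nat) \<Rightarrow> (nat \<Rightarrow> nat) \<Rightarrow> point set" where
  "Xspace b m n = {X. \<forall>i. (i \<in> {1..b} \<longrightarrow> X i \<in> blk (m i) (n i)) \<and> (i \<notin> {1..b} \<longrightarrow> X i = (\<lambda>r c. 0))}"

definition blk_inner :: "nat \<Rightarrow> nat \<Rightarrow> blockmat \<Rightarrow> blockmat \<Rightarrow> real" where
  "blk_inner m n A B = (\<Sum>r<m. \<Sum>c<n. A r c * B r c)"

definition X_inner :: "nat \<Rightarrow> (nat \<Rightarrow> nat) \<Rightarrow> (nat \<Rightarrow> nat) \<Rightarrow> point \<Rightarrow> point \<Rightarrow> real" where
  "X_inner b m n X Y = (\<Sum>i\<in>{1..b}. blk_inner (m i) (n i) (X i) (Y i))"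

definition X_fro :: "nat \<Rightarrow> (nat \<Rightarrow> nat) \<Rightarrow> (nat \<Rightarrow> nat) \<Rightarrow> point \<Rightarrow> real" where
  "X_fro b m n X = sqrt (X_inner b m n X X)"

definition X_add :: "point \<Rightarrow> point \<Rightarrow> point" where
  "X_add X Y = (\<lambda>i r c. X i r c + Y i r c)"

definition X_diff :: "point \<Rightarrow> point \<Rightarrow> point" where
  "X_diff X Y = (\<lambda>i r c. X i r c - Y i r c)"

definition norm_on :: "blockmat set \<Rightarrow> (blockmat \<Rightarrow> real) \<Rightarrow> bool" where
  "norm_on B N \<longleftrightarrow>
     (\<forall>x\<in>B. 0 \<le> N x) \<and>
     (\<forall>x\<in>B. N x = 0 \<longleftrightarrow> x = (\<lambda>r c. 0)) \<and>
     (\<forall>x\<in>B. \<forall>a. N (\<lambda>r c. a * x r c) = \<bar>a\<bar> * N x) \<and>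
     (\<forall>x\<in>B. \<forall>y\<in>B. N (\<lambda>r c. x r c + y r c) \<le> N x + N y)"

definition dual_norm :: "nat \<Rightarrow> nat \<Rightarrow> (blockmat \<Rightarrow> real) \<Rightarrow> blockmat \<Rightarrow> real" where
  "dual_norm m n N G = Sup {blk_inner m n G Z | Z. Z \<in> blk m n \<and> N Z \<le> 1}"

definition has_grad :: "nat \<Rightarrow> (nat \<Rightarrow> nat) \<Rightarrow> (nat \<Rightarrow> nat) \<Rightarrow> (point \<Rightarrow> real) \<Rightarrow> point \<Rightarrow> point \<Rightarrow> bool" where
  "has_grad b m n f G X \<longleftrightarrow> G \<in> Xspace b m n \<and>
     (\<forall>e>0. \<exists>d>0. \<forall>H\<in>Xspace b m n. X_fro b m n H < d \<longrightarrow>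
        \<bar>f (X_add X H) - f X - X_inner b m n G H\<bar> \<le> e * X_fro b m n H)"

definition continuous_grad :: "nat \<Rightarrow> (nat \<Rightarrow> nat) \<Rightarrow> (nat \<Rightarrow> nat) \<Rightarrow> (point \<Rightarrow> point) \<Rightarrow> bool" where
  "continuous_grad b m n g \<longleftrightarrow> (\<forall>X\<in>Xspace b m n. \<forall>e>0. \<exists>d>0. \<forall>Y\<in>Xspace b m n.
      X_fro b m n (X_diff Y X) < d \<longrightarrow> X_fro b m n (X_diff (g Y) (g X)) < e)"

definition rcd_step :: "(point \<Rightarrow> point) \<Rightarrow> (nat \<Rightarrow> blockmat \<Rightarrow> blockmat) \<Rightarrow> (nat \<Rightarrow> nat set \<Rightarrow> real)
    \<Rightarrow> nat set \<Rightarrow> point \<Rightarrow> point" where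
  "rcd_step g sharp L0 S X = (\<lambda>i. if i \<in> S
       then (\<lambda>r c. X i r c - (1 / L0 i S) * sharp i (g X i) r c) else X i)"

primrec rcd_iter :: "(point \<Rightarrow> point) \<Rightarrow> (nat \<Rightarrow> blockmat \<Rightarrow> blockmat) \<Rightarrow> (nat \<Rightarrow> nat set \<Rightarrow> real)
    \<Rightarrow> point \<Rightarrow> (nat \<Rightarrow> nat set) \<Rightarrow> nat \<Rightarrow> point" where
  "rcd_iter g sharp L0 X0 Ss 0 = X0"
| "rcd_iter g sharp L0 X0 Ss (Suc k) = rcd_step g sharp L0 (Ss k) (rcd_iter g sharp L0 X0 Ss k)"

end

theory Submission
  imports Defs
begin

lemma exp_pair:
  fixes h :: "'a \<times> 'b \<Rightarrow> real"
  assumes "finite (set_pmf p)" "finite (set_pmf q)"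
  shows "measure_pmf.expectation (pair_pmf p q) h
       = measure_pmf.expectation q (\<lambda>y. measure_pmf.expectation p (\<lambda>x. h (x, y)))"
proof -
  have "measure_pmf.expectation (pair_pmf p q) h = (\<Sum>z\<in>set_pmf p \<times> set_pmf q. h z * pmf (pair_pmf p q) z)"
    by (rule integral_measure_pmf_real) (use assms in auto)
  also have "\<dots> = (\<Sum>y\<in>set_pmf q. \<Sum>x\<in>set_pmf p. h (x,y) * pmf p x * pmf q y)"
    by (subst sum.swap, simp add: sum.cartesian_product mult_ac case_prod_beta, intro sum.cong refl)
       (metis pmf_pair prod.collapse)
  also have "\<dots> = (\<Sum>y\<in>set_pmf q. (\<Sum>x\<in>set_pmf p. h (x,y) * pmf p x) * pmf q y)"
    by (simp add: sum_distrib_right)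
  also have "\<dots> = (\<Sum>y\<in>set_pmf q. measure_pmf.expectation p (\<lambda>x. h (x, y)) * pmf q y)"
    by (intro sum.cong refl arg_cong2[where f="(*)"] integral_measure_pmf_real[symmetric]) (use assms in auto)
  also have "\<dots> = measure_pmf.expectation q (\<lambda>y. measure_pmf.expectation p (\<lambda>x. h (x, y)))"
    by (rule integral_measure_pmf_real[symmetric]) (use assms in auto)
  finally show ?thesis .
qed

lemma exp_mono_fin:
  fixes f g :: "'a \<Rightarrow> real"
  assumes "finite (set_pmf M)" "\<And>x. x \<in> set_pmf M \<Longrightarrow> f x \<le> g x"
  shows "measure_pmf.expectation M f \<le> measure_pmf.expectation M g"
  by (rule integral_mono_AE) (use assms in \<open>auto simp: AE_measure_pmf_iff intro: integrable_measure_pmf_finite\<close>)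

lemma blk_inner_scale: "blk_inner m n G (\<lambda>r c. a * Z r c) = a * blk_inner m n G Z"
  by (simp add: blk_inner_def sum_distrib_left mult_ac)

lemma blk_inner_scale': "blk_inner m n G (\<lambda>r c. - (Z r c / a)) = - (blk_inner m n G Z / a)"
  by (simp add: blk_inner_def sum_negf sum_divide_distrib)

lemma blk_inner_zero: "blk_inner m n G (\<lambda>r c. 0) = 0"
  by (simp add: blk_inner_def)

lemma blk_scale: "Z \<in> blk m n \<Longrightarrow> (\<lambda>r c. a * Z r c) \<in> blk m n"
  by (auto simp: blk_def)

lemma blk_zero: "(\<lambda>r c. 0) \<in> blk m n"
  by (auto simp: blk_def)

lemma dual_bound:
  assumes nm: "norm_on (blk m n) N" and G: "G \<in> blk m n"
    and s: "s \<in> blk m n"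
    and opt: "\<forall>Z\<in>blk m n. blk_inner m n G Z - (N Z)\<^sup>2 / 2 \<le> blk_inner m n G s - (N s)\<^sup>2 / 2"
  shows "(dual_norm m n N G)\<^sup>2 \<le> 2 * (blk_inner m n G s - (N s)\<^sup>2 / 2)"
proof -
  define C where "C = blk_inner m n G s - (N s)\<^sup>2 / 2"
  define A where "A = {blk_inner m n G Z | Z. Z \<in> blk m n \<and> N Z \<le> 1}"
  have N0: "N (\<lambda>r c. 0) = 0" using nm blk_zero unfolding norm_on_def by blast
  have "0 \<le> C" using opt[rule_format, OF blk_zero] N0 by (simp add: blk_inner_zero C_def)
  have "0 \<in> A" unfolding A_def using N0 blk_zero blk_inner_zero by force
  have ub: "a \<le> sqrt (2 * C)" if "a \<in> A" for a
  proof (cases "a \<le> 0")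
    case True then show ?thesis using \<open>0 \<le> C\<close> by (meson order.trans real_sqrt_ge_zero mult_nonneg_nonneg zero_le_numeral)
  next
    case False
    from that obtain Z where Z: "a = blk_inner m n G Z" "Z \<in> blk m n" "N Z \<le> 1" unfolding A_def by blast
    have Z': "(\<lambda>r c. a * Z r c) \<in> blk m n" using blk_scale Z by blast
    have NZ: "N (\<lambda>r c. a * Z r c) = a * N Z" using nm Z(2) False unfolding norm_on_def by auto
    have NZ0: "0 \<le> N Z" using nm Z(2) unfolding norm_on_def by auto
    have "a * a - (a * N Z)\<^sup>2 / 2 \<le> C"
      using opt[rule_format, OF Z'] NZ Z(1) unfolding C_def blk_inner_scale by simp
    moreover have "(a * N Z)\<^sup>2 \<le> a\<^sup>2" using NZ0 Z(3) False
      by (simp add: power_mult_distrib power_le_one mult_left_le)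
    ultimately have "a\<^sup>2 \<le> 2 * C" by (simp add: power2_eq_square)
    then show ?thesis by (rule real_le_rsqrt)
  qed
  have bdd: "bdd_above A" using ub by (auto simp: bdd_above_def)
  have d: "dual_norm m n N G = Sup A" unfolding dual_norm_def A_def by simp
  have "Sup A \<le> sqrt (2 * C)" using \<open>0 \<in> A\<close> ub by (intro cSup_least) auto
  moreover have "0 \<le> Sup A" using \<open>0 \<in> A\<close> bdd by (rule cSup_upper)
  ultimately have "(Sup A)\<^sup>2 \<le> (sqrt (2*C))\<^sup>2" by (intro power_mono)
  then show ?thesis using \<open>0 \<le> C\<close> d C_def by simp
qed

lemma rcd_iter_cong:
  "(\<forall>j<k. Ss j = Ss' j) \<Longrightarrow> rcd_iter g sh L X0 Ss k = rcd_iter g sh L X0 Ss' k"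
proof (induction k)
  case (Suc k)
  then have "rcd_iter g sh L X0 Ss k = rcd_iter g sh L X0 Ss' k" by simp
  then show ?case using Suc.prems by simp
qed simp

lemma Pi_fin: "finite (set_pmf D) \<Longrightarrow> finite (set_pmf (Pi_pmf {..<(k::nat)} dflt (\<lambda>_. D)))"
proof (induction k)
  case 0 then show ?case by simp
next
  case (Suc k)
  then show ?case by (simp add: lessThan_Suc Pi_pmf_insert)
qed

lemma Pi_set: "Ss \<in> set_pmf (Pi_pmf {..<(k::nat)} dflt (\<lambda>_. D)) \<Longrightarrow> j < k \<Longrightarrow> Ss j \<in> set_pmf D"
proof -
  assume a: "Ss \<in> set_pmf (Pi_pmf {..<k} dflt (\<lambda>_. D))" "j < k"
  have "Ss \<in> PiE_dflt {..<k} dflt (set_pmf \<circ> (\<lambda>_. D))"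
    using set_Pi_pmf_subset'[of "{..<k}" dflt "\<lambda>_. D"] a(1) finite_lessThan by blast
  then show ?thesis using a(2) by (simp add: PiE_dflt_def)
qed


theorem theorem5:
  fixes b :: nat and m n :: "nat \<Rightarrow> nat"
    and N :: "nat \<Rightarrow> blockmat \<Rightarrow> real"
    and f :: "point \<Rightarrow> real" and grad :: "point \<Rightarrow> point" and fstar :: real
    and D :: "nat set pmf" and L0 :: "nat \<Rightarrow> nat set \<Rightarrow> real"
    and sharp :: "nat \<Rightarrow> blockmat \<Rightarrow> blockmat"
    and X0 :: point and K :: nat
  assumes norms: "\<forall>i\<in>{1..b}. norm_on (blk (m i) (n i)) (N i)"
    and grad: "\<forall>X\<in>Xspace b m n. has_grad b m n f (grad X) X"
    and grad_cont: "continuous_grad b m n grad"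
    and lower: "\<forall>X\<in>Xspace b m n. fstar \<le> f X"
    and D_sub: "\<forall>S\<in>set_pmf D. S \<subseteq> {1..b}"
    and L0_nonneg: "\<forall>S\<in>set_pmf D. \<forall>i\<in>{1..b}. 0 \<le> L0 i S"
    and L0_zero: "\<forall>S\<in>set_pmf D. \<forall>i\<in>{1..b}. i \<notin> S \<longrightarrow> L0 i S = 0"
    and smooth: "\<forall>S\<in>set_pmf D. \<forall>X\<in>Xspace b m n. \<forall>\<Gamma>\<in>Xspace b m n.
        (\<forall>i\<in>{1..b}. i \<notin> S \<longrightarrow> \<Gamma> i = (\<lambda>r c. 0)) \<longrightarrow>
        f (X_add X \<Gamma>) - f X - X_inner b m n (grad X) \<Gamma>
          \<le> (\<Sum>i\<in>S. L0 i S / 2 * (N i (\<Gamma> i))\<^sup>2)"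
    and sharp: "\<forall>i\<in>{1..b}. \<forall>G\<in>blk (m i) (n i).
        sharp i G \<in> blk (m i) (n i) \<and>
        (\<forall>Z\<in>blk (m i) (n i). blk_inner (m i) (n i) G Z - (N i Z)\<^sup>2 / 2
           \<le> blk_inner (m i) (n i) G (sharp i G) - (N i (sharp i G))\<^sup>2 / 2)"
    and X0: "X0 \<in> Xspace b m n"
    and K: "1 \<le> K"
  shows "(let w = (\<lambda>i. measure_pmf.expectation D
                       (\<lambda>S. if i \<in> S then 1 / (2 * L0 i S) else 0));
              wbar = (1 / real b) * (\<Sum>j\<in>{1..b}. w j)
          in (1 / real K) * (\<Sum>k<K. \<Sum>i\<in>{1..b}. w i / wbar *
                measure_pmf.expectation (Pi_pmf {..<k} {} (\<lambda>_. D))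
                  (\<lambda>Ss. (dual_norm (m i) (n i) (N i) (grad (rcd_iter grad sharp L0 X0 Ss k) i))\<^sup>2))
             \<le> (f X0 - fstar) / (real K * wbar))"
proof -
  define d where "d i X = (dual_norm (m i) (n i) (N i) (grad X i))" for i X
  define c where "c i = (\<lambda>S. if i \<in> S then 1 / (2 * L0 i S) else 0)" for i
  define w where "w i = measure_pmf.expectation D (c i)" for i
  define wbar where "wbar = (1 / real b) * (\<Sum>j\<in>{1..b}. w j)"
  define P where "P k = Pi_pmf {..<k} {} (\<lambda>_. D)" for k :: nat
  define it where "it Ss k = rcd_iter grad sharp L0 X0 Ss k" for Ss k
  define F where "F k = measure_pmf.expectation (P k) (\<lambda>Ss. f (it Ss k))" for k
  define E where "E i k = measure_pmf.expectation (P k) (\<lambda>Ss. (d i (it Ss k))\<^sup>2)" for i k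
  have finD: "finite (set_pmf D)"
  proof -
    have "set_pmf D \<subseteq> Pow {1..b}" using D_sub by auto
    then show ?thesis by (rule finite_subset) simp
  qed
  have finP: "finite (set_pmf (P k))" for k unfolding P_def by (rule Pi_fin[OF finD])
  have gX: "grad X \<in> Xspace b m n" if "X \<in> Xspace b m n" for X
    using grad that unfolding has_grad_def by blast
  have step_in: "rcd_step grad sharp L0 S X \<in> Xspace b m n"
    if X: "X \<in> Xspace b m n" and S: "S \<in> set_pmf D" for X S
  proof -
    have sh: "sharp i (grad X i) \<in> blk (m i) (n i)" if "i \<in> {1..b}" for i
      using sharp that gX[OF X] unfolding Xspace_def by blast
    have Sb: "S \<subseteq> {1..b}" using D_sub S by blast
    show ?thesis unfolding Xspace_def
    proof (intro CollectI allI conjI impI)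
      fix i assume i: "i \<in> {1..b}"
      show "rcd_step grad sharp L0 S X i \<in> blk (m i) (n i)"
        using sh[OF i] X i unfolding Xspace_def blk_def rcd_step_def by auto
    next
      fix i assume i: "i \<notin> {1..b}"
      then show "rcd_step grad sharp L0 S X i = (\<lambda>r c. 0)"
        using X Sb unfolding Xspace_def rcd_step_def by auto
    qed
  qed
  have descent: "f (rcd_step grad sharp L0 S X) \<le> f X - (\<Sum>i\<in>{1..b}. c i S * (d i X)\<^sup>2)"
    if X: "X \<in> Xspace b m n" and S: "S \<in> set_pmf D" for X S
  proof -
    define g where "g = grad X"
    define s where "s i = sharp i (g i)" for i
    define \<Gamma> where "\<Gamma> i = (if i \<in> S then (\<lambda>r c. (- (1 / L0 i S)) * s i r c) else (\<lambda>r c. 0))" for i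
    have gi: "g i \<in> blk (m i) (n i)" if "i \<in> {1..b}" for i
      using gX[OF X] that unfolding g_def Xspace_def by blast
    have si: "s i \<in> blk (m i) (n i)" if "i \<in> {1..b}" for i
      using sharp gi[OF that] that unfolding s_def by blast
    have Sb: "S \<subseteq> {1..b}" using D_sub S by blast
    have \<Gamma>X: "\<Gamma> \<in> Xspace b m n"
      unfolding Xspace_def using Sb si by (auto simp: \<Gamma>_def blk_def)
    have add: "X_add X \<Gamma> = rcd_step grad sharp L0 S X"
      unfolding X_add_def rcd_step_def \<Gamma>_def s_def g_def by (intro ext) auto
    have z: "\<forall>i\<in>{1..b}. i \<notin> S \<longrightarrow> \<Gamma> i = (\<lambda>r c. 0)" by (simp add: \<Gamma>_def)
    have sm: "f (X_add X \<Gamma>) - f X - X_inner b m n g \<Gamma> \<le> (\<Sum>i\<in>S. L0 i S / 2 * (N i (\<Gamma> i))\<^sup>2)"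
      using smooth S X \<Gamma>X z unfolding g_def by blast
    have inner: "X_inner b m n g \<Gamma> = (\<Sum>i\<in>{1..b}. if i \<in> S then - (1 / L0 i S) * blk_inner (m i) (n i) (g i) (s i) else 0)"
      unfolding X_inner_def \<Gamma>_def by (intro sum.cong refl) (auto simp: blk_inner_scale' blk_inner_zero)
    have Nsc: "N i (\<Gamma> i) = (1 / L0 i S) * N i (s i)" if "i \<in> S" for i
    proof -
      have i: "i \<in> {1..b}" using that Sb by blast
      have "0 \<le> L0 i S" using L0_nonneg S i by blast
      have sc: "N i (\<lambda>r c. (- (1 / L0 i S)) * s i r c) = \<bar>- (1 / L0 i S)\<bar> * N i (s i)"
        using norms i si[OF i] unfolding norm_on_def by blast
      then show ?thesis using \<open>0 \<le> L0 i S\<close> that unfolding \<Gamma>_def by simp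
    qed
    have rhs: "(\<Sum>i\<in>S. L0 i S / 2 * (N i (\<Gamma> i))\<^sup>2)
        = (\<Sum>i\<in>{1..b}. if i \<in> S then L0 i S / 2 * ((1 / L0 i S) * N i (s i))\<^sup>2 else 0)"
    proof -
      have "(\<Sum>i\<in>S. L0 i S / 2 * (N i (\<Gamma> i))\<^sup>2) = (\<Sum>i\<in>S. L0 i S / 2 * ((1 / L0 i S) * N i (s i))\<^sup>2)"
        using Nsc by simp
      also have "\<dots> = (\<Sum>i\<in>{1..b} \<inter> S. L0 i S / 2 * ((1 / L0 i S) * N i (s i))\<^sup>2)"
        using Sb by (simp add: Int_absorb1)
      also have "\<dots> = (\<Sum>i\<in>{1..b}. if i \<in> S then L0 i S / 2 * ((1 / L0 i S) * N i (s i))\<^sup>2 else 0)"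
        by (rule sum.inter_restrict) simp
      finally show ?thesis .
    qed
    have tm: "(if i \<in> S then - (1 / L0 i S) * blk_inner (m i) (n i) (g i) (s i) else 0)
        + (if i \<in> S then L0 i S / 2 * ((1 / L0 i S) * N i (s i))\<^sup>2 else 0) \<le> - (c i S * (d i X)\<^sup>2)"
      if i: "i \<in> {1..b}" for i
    proof (cases "i \<in> S")
      case False then show ?thesis by (simp add: c_def)
    next
      case True
      have L: "0 \<le> L0 i S" using L0_nonneg S i by blast
      show ?thesis
      proof (cases "L0 i S = 0")
        case True then show ?thesis by (simp add: c_def)
      next
        case False
        then have Lp: "0 < L0 i S" using L by simp
        have db: "(d i X)\<^sup>2 \<le> 2 * (blk_inner (m i) (n i) (g i) (s i) - (N i (s i))\<^sup>2 / 2)"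
          unfolding d_def g_def[symmetric] s_def
          using dual_bound[of "m i" "n i" "N i" "g i" "sharp i (g i)"] norms sharp gi i by blast
        show ?thesis using \<open>i \<in> S\<close> Lp db by (simp add: c_def field_simps power2_eq_square) (metis distrib_left mult_left_mono less_imp_le)
      qed
    qed
    have "f (rcd_step grad sharp L0 S X) \<le> f X + X_inner b m n g \<Gamma> + (\<Sum>i\<in>S. L0 i S / 2 * (N i (\<Gamma> i))\<^sup>2)"
      using sm add by simp
    also have "\<dots> = f X + (\<Sum>i\<in>{1..b}. (if i \<in> S then - (1 / L0 i S) * blk_inner (m i) (n i) (g i) (s i) else 0)
        + (if i \<in> S then L0 i S / 2 * ((1 / L0 i S) * N i (s i))\<^sup>2 else 0))"
      unfolding inner rhs sum.distrib by simp
    also have "\<dots> \<le> f X + (\<Sum>i\<in>{1..b}. - (c i S * (d i X)\<^sup>2))"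
      using tm by (intro add_left_mono sum_mono) auto
    finally show ?thesis by (simp add: sum_negf)
  qed
  have it_in: "it Ss k \<in> Xspace b m n" if "\<forall>j<k. Ss j \<in> set_pmf D" for Ss k
    using that
  proof (induction k)
    case 0 then show ?case using X0 by (simp add: it_def)
  next
    case (Suc k) then show ?case using step_in by (simp add: it_def)
  qed
  have rec: "F (Suc k) \<le> F k - (\<Sum>i\<in>{1..b}. w i * E i k)" for k
  proof -
    have PS: "P (Suc k) = map_pmf (\<lambda>(y,f). f(k:=y)) (pair_pmf D (P k))"
      unfolding P_def by (simp add: lessThan_Suc Pi_pmf_insert)
    have "F (Suc k) = measure_pmf.expectation (pair_pmf D (P k)) (\<lambda>z. f (it ((snd z)(k := fst z)) (Suc k)))"
      unfolding F_def PS by (simp add: case_prod_beta)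
    also have "\<dots> = measure_pmf.expectation (P k) (\<lambda>Ss. measure_pmf.expectation D (\<lambda>y. f (it (Ss(k := y)) (Suc k))))"
      by (subst exp_pair[OF finD finP]) simp
    also have "\<dots> = measure_pmf.expectation (P k) (\<lambda>Ss. measure_pmf.expectation D (\<lambda>y. f (rcd_step grad sharp L0 y (it Ss k))))"
    proof -
      have "it (Ss(k := y)) (Suc k) = rcd_step grad sharp L0 y (it Ss k)" for Ss y
      proof -
        have "rcd_iter grad sharp L0 X0 (Ss(k:=y)) k = rcd_iter grad sharp L0 X0 Ss k"
          by (rule rcd_iter_cong) simp
        then show ?thesis unfolding it_def by simp
      qed
      then show ?thesis by (simp only:)
    qed
    also have "\<dots> \<le> measure_pmf.expectation (P k) (\<lambda>Ss. measure_pmf.expectation D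
        (\<lambda>y. f (it Ss k) - (\<Sum>i\<in>{1..b}. c i y * (d i (it Ss k))\<^sup>2)))"
    proof (rule exp_mono_fin[OF finP])
      fix Ss assume Ss: "Ss \<in> set_pmf (P k)"
      have "\<forall>j<k. Ss j \<in> set_pmf D" using Ss unfolding P_def by (auto intro: Pi_set)
      then have "it Ss k \<in> Xspace b m n" by (rule it_in)
      then show "measure_pmf.expectation D (\<lambda>y. f (rcd_step grad sharp L0 y (it Ss k)))
          \<le> measure_pmf.expectation D (\<lambda>y. f (it Ss k) - (\<Sum>i\<in>{1..b}. c i y * (d i (it Ss k))\<^sup>2))"
        by (intro exp_mono_fin[OF finD] descent)
    qed
    also have "\<dots> = measure_pmf.expectation (P k) (\<lambda>Ss. f (it Ss k) - (\<Sum>i\<in>{1..b}. w i * (d i (it Ss k))\<^sup>2))"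
      unfolding w_def
      by (simp add: integrable_measure_pmf_finite[OF finD] integral_diff integral_sum)
    also have "\<dots> = F k - (\<Sum>i\<in>{1..b}. w i * E i k)"
      unfolding F_def E_def
      by (simp add: integrable_measure_pmf_finite[OF finP] integral_diff integral_sum)
    finally show ?thesis .
  qed
  have tel: "(\<Sum>k<K'. \<Sum>i\<in>{1..b}. w i * E i k) \<le> F 0 - F K'" for K'
  proof (induction K')
    case 0 then show ?case by simp
  next
    case (Suc K') then show ?case using rec[of K'] by simp
  qed
  have F0: "F 0 = f X0"
  proof -
    have "F 0 = measure_pmf.expectation (P 0) (\<lambda>_. f X0)" unfolding F_def it_def by simp
    also have "\<dots> = f X0" by (simp add: measure_pmf.prob_space)
    finally show ?thesis .
  qed
  have FK: "fstar \<le> F K"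
  proof -
    have "measure_pmf.expectation (P K) (\<lambda>_. fstar) \<le> F K"
      unfolding F_def
    proof (rule exp_mono_fin[OF finP])
      fix Ss assume Ss: "Ss \<in> set_pmf (P K)"
      have "\<forall>j<K. Ss j \<in> set_pmf D" using Ss unfolding P_def by (auto intro: Pi_set)
      then have "it Ss K \<in> Xspace b m n" by (rule it_in)
      then show "fstar \<le> f (it Ss K)" using lower by blast
    qed
    then show ?thesis by simp
  qed
  have wnn: "0 \<le> w i" if i: "i \<in> {1..b}" for i
  proof -
    have "measure_pmf.expectation D (\<lambda>_. 0) \<le> w i" unfolding w_def
    proof (rule exp_mono_fin[OF finD])
      fix S assume S: "S \<in> set_pmf D"
      show "0 \<le> c i S" using L0_nonneg S i by (simp add: c_def)
    qed
    then show ?thesis by simp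
  qed
  have "0 \<le> (\<Sum>j\<in>{1..b}. w j)" using wnn by (intro sum_nonneg) auto
  then have wbnn: "0 \<le> wbar" unfolding wbar_def by simp
  define T where "T = (\<Sum>k<K. \<Sum>i\<in>{1..b}. w i * E i k)"
  have T: "T \<le> f X0 - fstar" using tel[of K] F0 FK unfolding T_def by simp
  have eq: "(\<Sum>k<K. \<Sum>i\<in>{1..b}. w i / wbar * E i k) = T / wbar"
    unfolding T_def by (simp add: sum_divide_distrib)
  have main: "(1 / real K) * (\<Sum>k<K. \<Sum>i\<in>{1..b}. w i / wbar * E i k) \<le> (f X0 - fstar) / (real K * wbar)"
  proof (cases "wbar = 0")
    case True then show ?thesis by simp
  next
    case False
    then have "0 < real K * wbar" using wbnn K by simp
    then have "T / (real K * wbar) \<le> (f X0 - fstar) / (real K * wbar)"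
      using T by (simp add: divide_right_mono)
    then show ?thesis unfolding eq by simp
  qed
  show ?thesis using main unfolding Let_def w_def c_def wbar_def E_def P_def it_def d_def by simp
qed

end
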